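(* (a) For every $n\ge 1$, \[ \sigma(n)+\sigma_o(n)+2\sum_{k=1}^{n-1}(-1)^k\delta_s(k)\bigl(\sigma(n-k)+\sigma_o(n-k)\bigr)=2(-1)^{n+1}n\,\delta_s(n). \] (b) For every $n\ge 1$, \[ \sum_{k=1}^{n}\bigl(\sigma_o(k)-\sigma_e(k)\bigr)\delta_t(n-k)=n\,\delta_t(n). \] (c) For every $n\ge 2$, \[ \sigma(n)+\sigma_s(n)+2\sum_{k=1}^{n-1}(-1)^k\delta_s(k)\bigl(\sigma(n-k)+\sigma_s(n-k)\bigr)=2(-1)^{n+1}n\,\delta_s(n). \]
   Context: $\sigma(n)$ is the sum of the positive divisors of $n$, $\sigma_o(n)$ the sum of the odd positive divisors of $n$, $\sigma_e(n)$ the sum of the even positive divisors of $n$, and $\sigma_s(n)=\sum_{d\mid n}(-1)^{d-1}\frac{n}{d}$. For $n\ge1$, $\delta_s(n)=1$ if $n$ is a perfect square and $0$ otherwise. For $n\ge0$, $\delta_t(n)=1$ if $n=\frac{m(m+1)}{2}$ for some integer $m\ge0$ (so $\delta_t(0)=1$), and $0$ otherwise. *)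

theory Defs
  imports Main
begin

definition sigma :: "nat \<Rightarrow> int" where
  "sigma n = (\<Sum>d\<in>{d. d dvd n}. int d)"

definition sigma_o :: "nat \<Rightarrow> int" where
  "sigma_o n = (\<Sum>d\<in>{d. d dvd n \<and> odd d}. int d)"

definition sigma_e :: "nat \<Rightarrow> int" where
  "sigma_e n = (\<Sum>d\<in>{d. d dvd n \<and> even d}. int d)"

definition sigma_s :: "nat \<Rightarrow> int" where
  "sigma_s n = (\<Sum>d\<in>{d. d dvd n}. (-1) ^ (d - 1) * int (n div d))"

definition delta_s :: "nat \<Rightarrow> int" where
  "delta_s n = (if \<exists>m. n = m ^ 2 then 1 else 0)"

definition delta_t :: "nat \<Rightarrow> int" where
  "delta_t n = (if \<exists>m. n = m * (m + 1) div 2 then 1 else 0)"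

end

theory Submission
  imports Defs "HOL-Computational_Algebra.Formal_Power_Series"
begin


notation fps_nth (infixl \<open>$!\<close> 75)

definition cg :: "nat \<Rightarrow> int fps \<Rightarrow> int fps \<Rightarrow> bool" where
  "cg T A B \<longleftrightarrow> (\<forall>i<T. A $! i = B $! i)"

lemma cg_refl[simp]: "cg T A A" by (simp add: cg_def)
lemma cg_sym: "cg T A B \<Longrightarrow> cg T B A" by (simp add: cg_def)
lemma cg_trans: "cg T A B \<Longrightarrow> cg T B C \<Longrightarrow> cg T A C" by (simp add: cg_def)
lemma cg_mono: "cg T A B \<Longrightarrow> S \<le> T \<Longrightarrow> cg S A B" by (simp add: cg_def)
lemma cg_add: "cg T A B \<Longrightarrow> cg T C E \<Longrightarrow> cg T (A + C) (B + E)" by (simp add: cg_def)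
lemma cg_diff: "cg T A B \<Longrightarrow> cg T C E \<Longrightarrow> cg T (A - C) (B - E)" by (simp add: cg_def)
lemma cg_uminus: "cg T A B \<Longrightarrow> cg T (- A) (- B)" by (simp add: cg_def)
lemma cg_mult: assumes "cg T A B" "cg T C E" shows "cg T (A * C) (B * E)"
  unfolding cg_def
proof (intro allI impI)
  fix i assume i: "i < T"
  show "(A * C) $! i = (B * E) $! i" unfolding fps_mult_nth
    by (rule sum.cong) (use assms i in \<open>auto simp: cg_def\<close>)
qed
lemma cg_sum: "(\<And>x. x \<in> S \<Longrightarrow> cg T (f x) (g x)) \<Longrightarrow> cg T (sum f S) (sum g S)"
  by (simp add: cg_def fps_sum_nth)
lemma cg_prod: "(\<And>x. x \<in> S \<Longrightarrow> cg T (f x) (g x)) \<Longrightarrow> cg T (prod f S) (prod g S)"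
  by (induction S rule: infinite_finite_induct) (auto intro: cg_mult)
lemma cg_Xpow_shift: "cg T A B \<Longrightarrow> cg (w + T) (fps_X ^ w * A) (fps_X ^ w * B)"
  by (auto simp: cg_def fps_X_power_mult_nth)
lemma cg_Xpow_zero: "T \<le> w \<Longrightarrow> cg T (fps_X ^ w) 0"
  by (auto simp: cg_def)
lemma cg_one_minus: "T \<le> w \<Longrightarrow> cg T (1 - fps_X ^ w) 1"
  using cg_diff[OF cg_refl cg_Xpow_zero] by force

lemma cg_cancel:
  assumes "cg T (A * C) (B * C)" "C $! 0 = 1"
  shows "cg T A B"
proof -
  have "cg T (A * C * fps_right_inverse C 1) (B * C * fps_right_inverse C 1)"
    by (rule cg_mult[OF assms(1) cg_refl])
  moreover have "C * fps_right_inverse C 1 = 1"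
    by (rule fps_right_inverse) (simp add: assms)
  ultimately show ?thesis by (simp add: mult.assoc)
qed

definition Dop :: "int fps \<Rightarrow> int fps" where "Dop f = fps_X * fps_deriv f"

lemma Dop_nth: "Dop f $! i = of_nat i * f $! i"
  by (cases i) (simp_all add: Dop_def)
lemma Dop_mult: "Dop (f * g) = Dop f * g + f * Dop g"
  by (simp add: Dop_def algebra_simps)
lemma cg_Dop: "cg T A B \<Longrightarrow> cg T (Dop A) (Dop B)"
  by (simp add: cg_def Dop_nth)

definition Lam :: "nat \<Rightarrow> int fps" where
  "Lam m = Abs_fps (\<lambda>i. if 0 < i \<and> m dvd i then 1 else 0)"

lemma Lam_nth: "Lam m $! i = (if 0 < i \<and> m dvd i then 1 else 0)"
  by (simp add: Lam_def)

lemma Lam_eq: assumes "0 < m" shows "(1 - fps_X ^ m) * Lam m = fps_X ^ m"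
proof (rule fps_ext)
  fix i
  have "((1 - fps_X ^ m) * Lam m) $! i = Lam m $! i - (fps_X ^ m * Lam m) $! i"
    by (simp add: algebra_simps)
  also have "\<dots> = (fps_X ^ m :: int fps) $! i"
  proof (cases "i < m")
    case True
    then have "\<not> (0 < i \<and> m dvd i)" using dvd_imp_le by fastforce
    then show ?thesis using True by (simp add: fps_X_power_mult_nth Lam_nth)
  next
    case False
    then have "m dvd i \<longleftrightarrow> m dvd (i - m)" by (simp add: dvd_minus_self)
    then show ?thesis using False assms by (auto simp: fps_X_power_mult_nth Lam_nth)
  qed
  finally show "((1 - fps_X ^ m) * Lam m) $! i = (fps_X ^ m :: int fps) $! i" .
qed

lemma Dop_factor: assumes "0 < m"
  shows "Dop (1 - fps_X ^ m) = - ((1 - fps_X ^ m) * (fps_const (int m) * Lam m))"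
proof -
  have "Dop (1 - fps_X ^ m) = - (fps_const (int m) * fps_X ^ m)"
    by (rule fps_ext) (auto simp: Dop_nth)
  also have "\<dots> = - ((1 - fps_X ^ m) * (fps_const (int m) * Lam m))"
    using Lam_eq[OF assms] by (metis mult.left_commute)
  finally show ?thesis .
qed

lemma Dop_prod:
  fixes n :: nat and g :: "nat \<Rightarrow> nat"
  shows "\<forall>i<n. 0 < g i \<Longrightarrow> Dop (\<Prod>i<n. 1 - fps_X ^ g i) =
     - ((\<Prod>i<n. 1 - fps_X ^ g i) * (\<Sum>i<n. fps_const (int (g i)) * Lam (g i)))"
proof (induction n)
  case 0
  then show ?case by (simp add: Dop_def)
next
  case (Suc n)
  have IH: "Dop (\<Prod>i<n. 1 - fps_X ^ g i) =
     - ((\<Prod>i<n. 1 - fps_X ^ g i) * (\<Sum>i<n. fps_const (int (g i)) * Lam (g i)))"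
    using Suc by auto
  have f: "Dop (1 - fps_X ^ g n) = - ((1 - fps_X ^ g n) * (fps_const (int (g n)) * Lam (g n)))"
    using Suc.prems by (simp add: Dop_factor)
  show ?case
    unfolding prod.lessThan_Suc sum.lessThan_Suc Dop_mult IH f
    by (simp add: algebra_simps)
qed

fun qbin :: "'a::comm_ring_1 \<Rightarrow> nat \<Rightarrow> nat \<Rightarrow> 'a" where
  "qbin p m 0 = 1"
| "qbin p 0 (Suc k) = 0"
| "qbin p (Suc m) (Suc k) = qbin p m k + p ^ Suc k * qbin p m (Suc k)"

fun tri :: "nat \<Rightarrow> nat" where
  "tri 0 = 0" | "tri (Suc k) = tri k + k"

lemma qbin_zero: "m < k \<Longrightarrow> qbin p m k = 0"
  by (induction p m k rule: qbin.induct) auto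

lemma qbin_thm:
  "(\<Prod>t<m. a + b * p ^ t) = (\<Sum>k\<le>m. qbin p m k * p ^ tri k * b ^ k * a ^ (m - k))"
proof (induction m arbitrary: b)
  case 0
  then show ?case by simp
next
  case (Suc m)
  define c where "c k = p ^ tri k * b ^ k * a ^ (Suc m - k)" for k
  have "(\<Sum>k\<le>Suc m. qbin p (Suc m) k * p ^ tri k * b ^ k * a ^ (Suc m - k))
      = (\<Sum>k\<le>Suc m. qbin p (Suc m) k * c k)" by (simp add: c_def mult.assoc)
  also have "\<dots> = c 0 + (\<Sum>k\<le>m. qbin p (Suc m) (Suc k) * c (Suc k))"
    by (simp only: sum.atMost_Suc_shift qbin.simps(1) mult_1_left)
  also have "\<dots> = c 0 + (\<Sum>k\<le>m. qbin p m k * c (Suc k)) + (\<Sum>k\<le>m. p ^ Suc k * qbin p m (Suc k) * c (Suc k))"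
    by (simp add: sum.distrib algebra_simps)
  finally have 0: "(\<Sum>k\<le>Suc m. qbin p (Suc m) k * p ^ tri k * b ^ k * a ^ (Suc m - k)) = (\<Sum>k\<le>m. qbin p m k * c (Suc k)) + (c 0 + (\<Sum>k\<le>m. p ^ Suc k * qbin p m (Suc k) * c (Suc k)))"
    by (simp add: algebra_simps)
  have "c 0 + (\<Sum>k\<le>m. p ^ Suc k * qbin p m (Suc k) * c (Suc k)) = (\<Sum>k\<le>Suc m. p ^ k * qbin p m k * c k)"
    by (simp only: sum.atMost_Suc_shift[of _ m] qbin.simps(1) power_0 mult_1_left mult_1_right)
  also have "\<dots> = (\<Sum>k\<le>m. p ^ k * qbin p m k * c k)"
    by (simp add: qbin_zero)
  finally have 1: "(\<Sum>k\<le>Suc m. qbin p (Suc m) k * p ^ tri k * b ^ k * a ^ (Suc m - k))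
     = (\<Sum>k\<le>m. qbin p m k * c (Suc k)) + (\<Sum>k\<le>m. p ^ k * qbin p m k * c k)" using 0 by simp
  have 2: "(\<Sum>k\<le>m. qbin p m k * c (Suc k)) = b * (\<Sum>k\<le>m. qbin p m k * p ^ tri k * (b * p) ^ k * a ^ (m - k))"
    by (simp add: sum_distrib_left c_def power_mult_distrib algebra_simps power_add)
  have 3: "(\<Sum>k\<le>m. p ^ k * qbin p m k * c k) = a * (\<Sum>k\<le>m. qbin p m k * p ^ tri k * (b * p) ^ k * a ^ (m - k))"
    unfolding sum_distrib_left c_def
    by (rule sum.cong) (auto simp: power_mult_distrib Suc_diff_le power_Suc algebra_simps)
  have "(\<Prod>t<Suc m. a + b * p ^ t) = (a + b) * (\<Prod>t<m. a + (b * p) * p ^ t)"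
    by (simp only: prod.lessThan_Suc_shift) (simp add: mult.assoc)
  also have "\<dots> = (a + b) * (\<Sum>k\<le>m. qbin p m k * p ^ tri k * (b * p) ^ k * a ^ (m - k))"
    by (simp add: Suc.IH)
  finally show ?case using 1 2 3 by (simp add: algebra_simps)
qed

definition qpoch :: "'a::comm_ring_1 \<Rightarrow> nat \<Rightarrow> 'a" where
  "qpoch p n = (\<Prod>i<n. 1 - p ^ Suc i)"

lemma qpoch_0[simp]: "qpoch p 0 = 1" by (simp add: qpoch_def)
lemma qpoch_Suc: "qpoch p (Suc n) = qpoch p n * (1 - p ^ Suc n)"
  by (simp add: qpoch_def)

lemma qbin_fact: "k \<le> m \<Longrightarrow> qbin p m k * qpoch p k * qpoch p (m - k) = qpoch p m"
proof (induction m arbitrary: k)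
  case 0
  then show ?case by simp
next
  case (Suc m)
  show ?case
  proof (cases k)
    case 0 then show ?thesis by simp
  next
    case (Suc k')
    then have k': "k' \<le> m" using Suc.prems by simp
    have t1: "qbin p m k' * qpoch p (Suc k') * qpoch p (m - k') = qpoch p m * (1 - p ^ Suc k')"
    proof -
      have "qbin p m k' * qpoch p (Suc k') * qpoch p (m - k') = (qbin p m k' * qpoch p k' * qpoch p (m - k')) * (1 - p ^ Suc k')"
        by (simp add: qpoch_Suc algebra_simps)
      then show ?thesis using Suc.IH[OF k'] by simp
    qed
    have t2: "p ^ Suc k' * qbin p m (Suc k') * qpoch p (Suc k') * qpoch p (m - k')
        = p ^ Suc k' * qpoch p m * (1 - p ^ (m - k'))"
    proof (cases "k' = m")
      case True then show ?thesis by (simp add: qbin_zero)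
    next
      case False
      then have "Suc k' \<le> m" using k' by simp
      then have eq: "qpoch p (m - k') = qpoch p (m - Suc k') * (1 - p ^ (m - k'))"
        by (metis Suc_diff_Suc Suc_le_lessD qpoch_Suc)
      have "p ^ Suc k' * qbin p m (Suc k') * qpoch p (Suc k') * qpoch p (m - k')
          = p ^ Suc k' * (qbin p m (Suc k') * qpoch p (Suc k') * qpoch p (m - Suc k')) * (1 - p ^ (m - k'))"
        unfolding eq by (simp only: mult_ac)
      then show ?thesis using Suc.IH[OF \<open>Suc k' \<le> m\<close>] by simp
    qed
    have "qbin p (Suc m) k * qpoch p k * qpoch p (Suc m - k)
        = qbin p m k' * qpoch p (Suc k') * qpoch p (m - k')
          + p ^ Suc k' * qbin p m (Suc k') * qpoch p (Suc k') * qpoch p (m - k')"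
      using Suc by (simp add: algebra_simps)
    also have "\<dots> = qpoch p m * (1 - p ^ Suc m)"
    proof -
      have "Suc k' + (m - k') = Suc m" using k' by simp
      then have pp: "p ^ Suc k' * p ^ (m - k') = p ^ Suc m" by (metis power_add)
      have "qpoch p m * (1 - p ^ Suc k') + p ^ Suc k' * qpoch p m * (1 - p ^ (m - k')) = qpoch p m - qpoch p m * (p ^ Suc k' * p ^ (m - k'))"
        by (simp add: algebra_simps)
      also have "\<dots> = qpoch p m * (1 - p ^ Suc m)" by (simp only: pp right_diff_distrib mult_1_right)
      finally show ?thesis unfolding t1 t2 .
    qed
    finally show ?thesis by (simp add: qpoch_Suc)
  qed
qed



lemma fps_prod_nth0: "(\<Prod>i\<in>S. f i) $! 0 = (\<Prod>i\<in>S. (f i :: int fps) $! 0)"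
  by (induction S rule: infinite_finite_induct) (auto simp: fps_mult_nth)

lemma qpoch_nth0: "0 < e \<Longrightarrow> qpoch (fps_X ^ e :: int fps) t $! 0 = 1"
  by (simp add: qpoch_def fps_prod_nth0 flip: power_mult)

lemma qpoch_cg:
  assumes "0 < e" "b \<le> a"
  shows "cg (Suc b) (qpoch (fps_X ^ e) a) (qpoch (fps_X ^ e) b)"
  using assms(2)
proof (induction a rule: dec_induct)
  case base then show ?case by simp
next
  case (step a)
  have "cg (Suc b) (1 - (fps_X ^ e) ^ Suc a) 1"
  proof -
    have "Suc a \<le> e * Suc a" using assms(1) by (cases e) auto
    then have "Suc b \<le> e * Suc a" using step.hyps by linarith
    then show ?thesis unfolding power_mult[symmetric] by (rule cg_one_minus)
  qed
  then have "cg (Suc b) (qpoch (fps_X ^ e) a * (1 - (fps_X ^ e) ^ Suc a)) (qpoch (fps_X ^ e) b * 1)"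
    using step.IH cg_mult by blast
  then show ?case by (simp add: qpoch_Suc)
qed

lemma qbin_cg:
  assumes e: "0 < e" and km: "k \<le> m" and T: "T \<le> Suc k" "T \<le> Suc (m - k)" "T \<le> Suc M"
  shows "cg T (qbin (fps_X ^ e) m k * qpoch (fps_X ^ e) M) 1"
proof (cases T)
  case 0 then show ?thesis by (simp add: cg_def)
next
  case (Suc t)
  define p :: "int fps" where "p = fps_X ^ e"
  define Q where "Q = qpoch p t"
  have c1: "cg T (qpoch p k) Q" "cg T (qpoch p (m - k)) Q" "cg T (qpoch p m) Q" "cg T (qpoch p M) Q"
    unfolding Q_def p_def Suc using T km Suc by (auto intro!: qpoch_cg e)
  have "cg T (qbin p m k * qpoch p k * qpoch p (m - k)) (qbin p m k * Q * Q)"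
    by (intro cg_mult c1 cg_refl)
  then have "cg T ((qbin p m k * Q) * Q) (1 * Q)"
    using qbin_fact[OF km, of p] c1(3) by (metis cg_sym cg_trans mult_1_left)
  then have "cg T (qbin p m k * Q) 1"
    by (rule cg_cancel) (simp add: Q_def p_def qpoch_nth0 e)
  moreover have "cg T (qbin p m k * qpoch p M) (qbin p m k * Q)"
    by (intro cg_mult c1 cg_refl)
  ultimately show ?thesis unfolding p_def by (blast intro: cg_trans)
qed

lemma tri_int: "int (tri k) * 2 = int k * (int k - 1)"
  by (induction k) (auto simp: algebra_simps)

lemma tri_Suc_div: "tri (Suc m) = m * (m + 1) div 2"
proof -
  have "int (tri (Suc m)) * 2 = int (m * (m + 1))" using tri_int[of "Suc m"] by (simp add: ring_distribs)
  then show ?thesis by linarith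
qed

lemma tri2: "2 * int (tri x) = int x * (int x - 1)"
  using tri_int[of x] by simp

lemma exp1:
  assumes "k \<le> 2 * N + 2"
  shows "2 * tri k + (2 * N + 1) * (2 * N + 2 - k)
       = (2 * tri (Suc N) + (2 * N + 1) * Suc N) + (if k \<le> Suc N then Suc N - k else k - Suc N) ^ 2"
proof -
  have d1: "int (2 * N + 2 - k) = 2 * int N + 2 - int k" using assms by simp
  have L: "int (2 * tri k + (2 * N + 1) * (2 * N + 2 - k)) = 2 * int (tri k) + (2 * int N + 1) * (2 * int N + 2 - int k)"
    by (simp only: of_nat_add of_nat_mult d1) simp
  have R: "int ((2 * tri (Suc N) + (2 * N + 1) * Suc N) + (if k \<le> Suc N then Suc N - k else k - Suc N) ^ 2)
     = 2 * int (tri (Suc N)) + (2 * int N + 1) * (int N + 1) + (int k - int N - 1) ^ 2"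
  proof (cases "k \<le> Suc N")
    case True
    have d2: "int (Suc N - k) = int N + 1 - int k" using True by simp
    show ?thesis using True by (simp only: if_True of_nat_add of_nat_mult of_nat_power d2) (simp add: power2_eq_square algebra_simps)
  next
    case False
    have d2: "int (k - Suc N) = int k - int N - 1" using False by simp
    show ?thesis using False by (simp only: if_False of_nat_add of_nat_mult of_nat_power d2) (simp add: power2_eq_square algebra_simps)
  qed
  have "int (2 * tri k + (2 * N + 1) * (2 * N + 2 - k))
       = int ((2 * tri (Suc N) + (2 * N + 1) * Suc N) + (if k \<le> Suc N then Suc N - k else k - Suc N) ^ 2)"
    unfolding L R tri2 by (simp add: algebra_simps power2_eq_square)
  then show ?thesis by (simp only: of_nat_eq_iff)
qed

lemma exp2:
  assumes "k \<le> 2 * n"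
  shows "tri k + n * (2 * n - k) = (tri n + n * n) + (if n \<le> k then tri (k - n) else tri (n - k + 1))"
proof -
  have d1: "int (2 * n - k) = 2 * int n - int k" using assms by simp
  have L: "2 * int (tri k + n * (2 * n - k)) = 2 * int (tri k) + 2 * int n * (2 * int n - int k)"
    by (simp only: of_nat_add of_nat_mult d1) (simp add: algebra_simps)
  have R: "2 * int ((tri n + n * n) + (if n \<le> k then tri (k - n) else tri (n - k + 1)))
      = 2 * int (tri n) + 2 * int n * int n + (int k - int n) * (int k - int n - 1)"
  proof (cases "n \<le> k")
    case True
    then show ?thesis using tri2[of "k - n"] by (simp add: of_nat_diff algebra_simps)
  next
    case False
    then show ?thesis using tri2[of "n - k + 1"] by (simp add: of_nat_diff algebra_simps)
  qed
  have "2 * int (tri k + n * (2 * n - k)) = 2 * int ((tri n + n * n) + (if n \<le> k then tri (k - n) else tri (n - k + 1)))"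
    unfolding L R tri2 by (simp add: algebra_simps)
  then have "int (tri k + n * (2 * n - k)) = int ((tri n + n * n) + (if n \<le> k then tri (k - n) else tri (n - k + 1)))"
    by (simp only: mult_cancel_left) simp
  then show ?thesis by (simp only: of_nat_eq_iff)
qed



definition Phi :: "nat \<Rightarrow> int fps" where
  "Phi n = (\<Prod>i<n. 1 - fps_X ^ (2 * i + 1))"

definition dst :: "nat \<Rightarrow> nat \<Rightarrow> nat" where
  "dst k n = (if k \<le> n then n - k else k - n)"

lemma prod_add_split: fixes b :: nat shows "(\<Prod>t<a+b. f t) = (\<Prod>t<a. f t) * (\<Prod>s<b. f (a + s))"
  by (induction b) (simp_all add: mult.assoc)

lemma prod_negX: "(\<Prod>t<n. - (fps_X ^ (2 * t))) = (-1) ^ n * (fps_X ^ (2 * tri n) :: int fps)"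
  by (induction n) (simp_all add: power_add algebra_simps)

lemma fin1:
  fixes N :: nat
  defines "n \<equiv> Suc N"
  shows "Phi n * Phi n = (\<Sum>k\<le>2*n. (-1) ^ (k + n) * qbin (fps_X ^ 2) (2 * n) k * fps_X ^ (dst k n ^ 2))"
proof -
  define a :: "int fps" where "a = fps_X ^ (2 * N + 1)"
  define p :: "int fps" where "p = fps_X ^ 2"
  define c where "c = 2 * tri (Suc N) + (2 * N + 1) * Suc N"
  have Q: "(\<Prod>t<2*n. a + (-1) * p ^ t) = (\<Sum>k\<le>2*n. qbin p (2*n) k * p ^ tri k * (-1) ^ k * a ^ (2*n - k))"
    by (rule qbin_thm)
  have R: "(\<Sum>k\<le>2*n. qbin p (2*n) k * p ^ tri k * (-1) ^ k * a ^ (2*n - k))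
      = fps_X ^ c * (\<Sum>k\<le>2*n. (-1) ^ k * qbin (fps_X ^ 2) (2 * n) k * fps_X ^ (dst k n ^ 2))"
    unfolding sum_distrib_left
  proof (rule sum.cong[OF refl])
    fix k assume "k \<in> {..2*n}"
    then have k: "k \<le> 2 * N + 2" by (simp add: n_def)
    have "p ^ tri k * a ^ (2*n - k) = fps_X ^ (2 * tri k + (2 * N + 1) * (2 * N + 2 - k))"
    proof -
      have 1: "p ^ tri k = fps_X ^ (2 * tri k)" by (simp add: p_def power_mult)
      have nn: "2*n - k = 2*N+2-k" by (simp add: n_def)
      have 2: "a ^ (2*n-k) = fps_X ^ ((2*N+1)*(2*N+2-k))" unfolding nn by (simp only: a_def power_mult)
      show ?thesis unfolding 1 2 by (simp only: power_add)
    qed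
    also have "\<dots> = fps_X ^ c * fps_X ^ (dst k n ^ 2)"
      unfolding exp1[OF k] c_def dst_def n_def by (simp add: power_add)
    finally show "qbin p (2*n) k * p ^ tri k * (-1) ^ k * a ^ (2*n - k) =
        fps_X ^ c * ((-1) ^ k * qbin (fps_X ^ 2) (2 * n) k * fps_X ^ (dst k n ^ 2))"
      by (simp add: p_def algebra_simps)
  qed
  have L1: "(\<Prod>t<n. a + (-1) * p ^ t) = (-1) ^ n * fps_X ^ (2 * tri n) * Phi n"
  proof -
    have "(\<Prod>t<n. a + (-1) * p ^ t) = (\<Prod>r<n. a + (-1) * p ^ (n - Suc r))"
      by (rule prod.nat_diff_reindex[symmetric])
    also have "\<dots> = (\<Prod>r<n. - (fps_X ^ (2 * (n - Suc r))) * (1 - fps_X ^ (2 * r + 1)))"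
    proof (rule prod.cong[OF refl])
      fix r assume "r \<in> {..<n}"
      then have "2 * (n - Suc r) + (2 * r + 1) = 2 * N + 1" by (simp add: n_def)
      then have "a = fps_X ^ (2 * (n - Suc r)) * fps_X ^ (2 * r + 1)"
        unfolding a_def by (metis power_add)
      then show "a + (-1) * p ^ (n - Suc r) = - (fps_X ^ (2 * (n - Suc r))) * (1 - fps_X ^ (2 * r + 1))"
        by (simp add: p_def algebra_simps flip: power_mult)
    qed
    also have "\<dots> = (\<Prod>r<n. - (fps_X ^ (2 * (n - Suc r)))) * Phi n"
      unfolding Phi_def by (rule prod.distrib)
    also have "(\<Prod>r<n. - (fps_X ^ (2 * (n - Suc r)))) = (\<Prod>t<n. - (fps_X ^ (2 * t)) :: int fps)"
      by (rule prod.nat_diff_reindex)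
    finally show ?thesis by (simp add: prod_negX)
  qed
  have L2: "(\<Prod>s<n. a + (-1) * p ^ (n + s)) = fps_X ^ ((2 * N + 1) * n) * Phi n"
  proof -
    have "(\<Prod>s<n. a + (-1) * p ^ (n + s)) = (\<Prod>s<n. fps_X ^ (2 * N + 1) * (1 - fps_X ^ (2 * s + 1)))"
    proof (rule prod.cong[OF refl])
      fix s
      have "2 * (n + s) = (2 * N + 1) + (2 * s + 1)" by (simp add: n_def)
      then have "p ^ (n + s) = fps_X ^ (2 * N + 1) * fps_X ^ (2 * s + 1)"
        unfolding p_def by (metis power_add power_mult)
      then show "a + (-1) * p ^ (n + s) = fps_X ^ (2 * N + 1) * (1 - fps_X ^ (2 * s + 1))"
        by (simp add: a_def algebra_simps)
    qed
    also have "\<dots> = (\<Prod>s<n. fps_X ^ (2 * N + 1)) * Phi n"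
      unfolding Phi_def by (rule prod.distrib)
    also have "(\<Prod>s<n. fps_X ^ (2 * N + 1)) = (fps_X ^ ((2 * N + 1) * n) :: int fps)"
      by (simp only: prod_constant card_lessThan power_mult)
    finally show ?thesis .
  qed
  have "(\<Prod>t<2*n. a + (-1) * p ^ t) = fps_X ^ c * ((-1) ^ n * (Phi n * Phi n))"
  proof -
    have e: "fps_X ^ (2 * tri n) * fps_X ^ ((2 * N + 1) * n) = (fps_X ^ c :: int fps)"
      by (simp add: c_def n_def flip: power_add)
    show ?thesis unfolding mult_2 prod_add_split L1 L2 e[symmetric]
      by (simp only: mult_ac)
  qed
  then have "fps_X ^ c * ((-1) ^ n * (Phi n * Phi n)) = fps_X ^ c * (\<Sum>k\<le>2*n. (-1) ^ k * qbin (fps_X ^ 2) (2 * n) k * fps_X ^ (dst k n ^ 2))"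
    using Q R by simp
  then have "(-1) ^ n * (Phi n * Phi n) = (\<Sum>k\<le>2*n. (-1) ^ k * qbin (fps_X ^ 2) (2 * n) k * fps_X ^ (dst k n ^ 2))"
    by simp
  then have "(-1) ^ n * ((-1) ^ n * (Phi n * Phi n)) = (\<Sum>k\<le>2*n. (-1) ^ n * ((-1) ^ k * qbin (fps_X ^ 2) (2 * n) k * fps_X ^ (dst k n ^ 2)))"
    by (simp add: sum_distrib_left)
  then show ?thesis
    by (simp add: power_add algebra_simps flip: power_mult_distrib)
qed



lemma term_cg:
  assumes e: "0 < e" and k: "k \<le> 2 * n" and w: "dst k n \<le> w + 1"
  shows "cg n (fps_X ^ w * (qbin (fps_X ^ e) (2 * n) k * qpoch (fps_X ^ e) n)) (fps_X ^ w)"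
proof -
  define T where "T = Suc (n - dst k n)"
  have "cg T (qbin (fps_X ^ e) (2 * n) k * qpoch (fps_X ^ e) n) 1"
    using e k by (intro qbin_cg) (auto simp: T_def dst_def)
  then have "cg (w + T) (fps_X ^ w * (qbin (fps_X ^ e) (2 * n) k * qpoch (fps_X ^ e) n)) (fps_X ^ w * 1)"
    by (rule cg_Xpow_shift)
  moreover have "n \<le> w + T" using w k by (auto simp: T_def dst_def)
  ultimately show ?thesis by (auto intro: cg_mono)
qed

lemma sum_split_mid: fixes n :: nat shows "(\<Sum>k\<le>2*n. f k) = (\<Sum>r\<le>n. f (n - r)) + (\<Sum>s\<in>{1..n}. f (n + s))"
proof -
  have "{..2*n} = {..n} \<union> (\<lambda>s. n + s) ` {1..n}"
  proof (rule set_eqI)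
    fix x show "x \<in> {..2*n} \<longleftrightarrow> x \<in> {..n} \<union> (\<lambda>s. n + s) ` {1..n}"
    proof
      assume "x \<in> {..2*n}"
      then show "x \<in> {..n} \<union> (\<lambda>s. n + s) ` {1..n}"
        by (cases "x \<le> n") (auto simp: image_iff intro!: bexI[where x="x - n"])
    qed auto
  qed
  moreover have "{..n} \<inter> (\<lambda>s. n + s) ` {1..n} = {}" by auto
  moreover have "sum f ({..n} \<union> (\<lambda>s. n + s) ` {1..n}) = (\<Sum>k\<le>n. f k) + sum f ((\<lambda>s. n + s) ` {1..n})"
    by (rule sum.union_disjoint) auto
  ultimately have "(\<Sum>k\<le>2*n. f k) = (\<Sum>k\<le>n. f k) + sum f ((\<lambda>s. n + s) ` {1..n})"
    by (simp only:)
  also have "sum f ((\<lambda>s. n + s) ` {1..n}) = (\<Sum>s\<in>{1..n}. f (n + s))"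
    by (subst sum.reindex) (auto simp: inj_on_def)
  finally have "(\<Sum>k\<le>2*n. f k) = (\<Sum>k\<le>n. f k) + (\<Sum>s\<in>{1..n}. f (n + s))" .
  moreover have "(\<Sum>k\<le>n. f k) = (\<Sum>r\<le>n. f (n - r))"
    using sum.nat_diff_reindex[of f "Suc n"] by (simp add: lessThan_Suc_atMost)
  ultimately show ?thesis by simp
qed

lemma neg1_pow_X_nth: "((-1::int fps) ^ j * fps_X ^ e) $! i = (if i = e then (-1) ^ j else 0)"
proof -
  have "(-1::int fps) ^ j = fps_const ((-1) ^ j)" by (simp flip: fps_const_power fps_const_neg)
  then show ?thesis by simp
qed

definition Gs :: "int fps" where
  "Gs = Abs_fps (\<lambda>i. if i = 0 then 1 else 2 * (-1) ^ i * delta_s i)"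

lemma neg1_even: "(-1::int) ^ (a + 2 * b) = (-1) ^ a"
  by (simp add: power_add power_mult)

lemma G1_trunc: "cg n Gs (\<Sum>k\<le>2*n. (-1) ^ (k + n) * fps_X ^ (dst k n ^ 2))"
  unfolding cg_def
proof (intro allI impI)
  fix i assume i: "i < n"
  have "(\<Sum>k\<le>2*n. (-1) ^ (k + n) * fps_X ^ (dst k n ^ 2)) $! i
      = (\<Sum>k\<le>2*n. (if i = dst k n ^ 2 then (-1::int) ^ (k + n) else 0))"
    by (simp add: fps_sum_nth neg1_pow_X_nth)
  also have "\<dots> = (\<Sum>r\<le>n. (if i = r ^ 2 then (-1) ^ r else 0)) + (\<Sum>s\<in>{1..n}. (if i = s ^ 2 then (-1) ^ s else 0))"
    unfolding sum_split_mid
  proof (intro arg_cong2[where f="(+)"] sum.cong refl)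
    fix r assume "r \<in> {..n}"
    then have "dst (n - r) n = r" "n - r + n = r + 2 * (n - r)" by (auto simp: dst_def)
    then have "(-1::int) ^ (n - r + n) = (-1) ^ r" "dst (n - r) n = r" by (simp_all only: neg1_even)
    then show "(if i = dst (n - r) n ^ 2 then (-1::int) ^ (n - r + n) else 0) = (if i = r ^ 2 then (-1) ^ r else 0)"
      by (simp add: neg1_even)
  next
    fix s assume "s \<in> {1..n}"
    then have "dst (n + s) n = s" "n + s + n = s + 2 * n" by (auto simp: dst_def)
    then have "(-1::int) ^ (n + s + n) = (-1) ^ s" "dst (n + s) n = s" by (simp_all only: neg1_even)
    then show "(if i = dst (n + s) n ^ 2 then (-1::int) ^ (n + s + n) else 0) = (if i = s ^ 2 then (-1) ^ s else 0)"
      by (simp add: neg1_even)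
  qed
  also have "\<dots> = Gs $! i"
  proof (cases "\<exists>m. i = m ^ 2")
    case True
    then obtain m where m: "i = m ^ 2" by blast
    have iff: "i = r ^ 2 \<longleftrightarrow> r = m" for r
      unfolding m using power_eq_iff_eq_base[of 2 m r] by auto
    have "m \<le> i" unfolding m by (simp add: power2_nat_le_imp_le)
    then have mn: "m \<le> n" using i by simp
    show ?thesis
    proof (cases "m = 0")
      case True
      then show ?thesis using m iff mn by (simp add: Gs_def)
    next
      case False
      have "(-1::int) ^ i = (-1) ^ m" unfolding m by (cases "even m") (simp_all add: power_mult)
      moreover have "i \<noteq> 0" using m False by simp
      ultimately show ?thesis using iff mn False True by (simp add: Gs_def delta_s_def)
    qed
  next
    case False
    then have "i \<noteq> r ^ 2" for r by blast
    moreover have "i \<noteq> 0" using False by (metis zero_power2)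
    ultimately show ?thesis using False by (simp add: Gs_def delta_s_def)
  qed
  finally show "Gs $! i = (\<Sum>k\<le>2*n. (-1) ^ (k + n) * fps_X ^ (dst k n ^ 2)) $! i" by simp
qed

lemma G1_cong:
  fixes N :: nat
  defines "n \<equiv> Suc N"
  shows "cg n Gs (Phi n * Phi n * qpoch (fps_X ^ 2) n)"
proof -
  have eq: "Phi n * Phi n * qpoch (fps_X ^ 2) n
      = (\<Sum>k\<le>2*n. (-1) ^ (k + n) * (fps_X ^ (dst k n ^ 2) * (qbin (fps_X ^ 2) (2 * n) k * qpoch (fps_X ^ 2) n)))"
    unfolding n_def fin1 sum_distrib_right by (simp add: mult_ac)
  have c: "cg n (\<Sum>k\<le>2*n. (-1) ^ (k + n) * (fps_X ^ (dst k n ^ 2) * (qbin (fps_X ^ 2) (2 * n) k * qpoch (fps_X ^ 2) n)))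
       (\<Sum>k\<le>2*n. (-1) ^ (k + n) * fps_X ^ (dst k n ^ 2))"
  proof (rule cg_sum)
    fix k assume k: "k \<in> {..2*n}"
    have "dst k n \<le> dst k n * dst k n" by (rule le_square)
    then have d: "dst k n \<le> dst k n ^ 2 + 1" unfolding power2_eq_square by linarith
    show "cg n ((-1) ^ (k + n) * (fps_X ^ (dst k n ^ 2) * (qbin (fps_X ^ 2) (2 * n) k * qpoch (fps_X ^ 2) n)))
       ((-1) ^ (k + n) * fps_X ^ (dst k n ^ 2))"
      using k d by (intro cg_mult[OF cg_refl] term_cg) auto
  qed
  show ?thesis unfolding eq by (rule cg_trans[OF G1_trunc cg_sym[OF c]])
qed



lemma Lamsum_nth:
  "(\<Sum>i<n. fps_const (int (g i)) * Lam (g i)) $! j = (if j = 0 then 0 else (\<Sum>i<n. if g i dvd j then int (g i) else 0))"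
  by (auto simp: fps_sum_nth Lam_nth intro: sum.cong)

lemma sum_filter_lessThan: fixes n :: nat shows "(\<Sum>i<n. if P i then f i else 0) = (\<Sum>i\<in>{i. i < n \<and> P i}. f i)"
proof -
  have "{i. i < n \<and> P i} = {i \<in> {..<n}. P i}" by auto
  then show ?thesis using sum.inter_filter[of "{..<n}" f P] by simp
qed

lemma sigma_o_eq:
  assumes j: "0 < j" "j \<le> 2 * n"
  shows "(\<Sum>i<n. if (2 * i + 1) dvd j then int (2 * i + 1) else 0) = sigma_o j"
proof -
  have "{d. d dvd j \<and> odd d} = (\<lambda>i. 2 * i + 1) ` {i. i < n \<and> (2 * i + 1) dvd j}"
  proof (rule set_eqI, rule iffI)
    fix d assume d: "d \<in> {d. d dvd j \<and> odd d}"
    then have "d \<le> j" using j by (auto intro: dvd_imp_le)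
    have o: "odd d" using d by simp
    have "d = 2 * (d div 2) + 1" using o by presburger
    moreover have "d div 2 < n" using \<open>d \<le> j\<close> j(2) o by presburger
    ultimately show "d \<in> (\<lambda>i. 2 * i + 1) ` {i. i < n \<and> (2 * i + 1) dvd j}" using d by (auto intro!: image_eqI[where x="d div 2"])
  qed auto
  then have "sigma_o j = (\<Sum>i\<in>{i. i < n \<and> (2 * i + 1) dvd j}. int (2 * i + 1))"
    unfolding sigma_o_def by (simp add: sum.reindex inj_on_def)
  then show ?thesis by (simp add: sum_filter_lessThan)
qed

lemma sigma_e_eq:
  assumes j: "0 < j" "j \<le> 2 * n"
  shows "(\<Sum>i<n. if (2 * i + 2) dvd j then int (2 * i + 2) else 0) = sigma_e j"
proof -
  have "{d. d dvd j \<and> even d} = (\<lambda>i. 2 * i + 2) ` {i. i < n \<and> (2 * i + 2) dvd j}"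
  proof (rule set_eqI, rule iffI)
    fix d assume d: "d \<in> {d. d dvd j \<and> even d}"
    then have "d \<le> j" "0 < d" using j by (auto intro: dvd_imp_le intro!: Nat.gr0I)
    have o: "even d" using d by simp
    have "d = 2 * (d div 2 - 1) + 2" using o \<open>0 < d\<close> by presburger
    moreover have "d div 2 - 1 < n" using \<open>d \<le> j\<close> j(2) o \<open>0 < d\<close> by presburger
    ultimately show "d \<in> (\<lambda>i. 2 * i + 2) ` {i. i < n \<and> (2 * i + 2) dvd j}" using d by (auto intro!: image_eqI[where x="d div 2 - 1"])
  qed auto
  then have "sigma_e j = (\<Sum>i\<in>{i. i < n \<and> (2 * i + 2) dvd j}. int (2 * i + 2))"
    unfolding sigma_e_def by (simp add: sum.reindex inj_on_def)
  then show ?thesis by (simp add: sum_filter_lessThan)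
qed

lemma sigma_eq:
  assumes j: "0 < j" "j \<le> n"
  shows "(\<Sum>i<n. if (i + 1) dvd j then int (i + 1) else 0) = sigma j"
proof -
  have "{d. d dvd j} = (\<lambda>i. i + 1) ` {i. i < n \<and> (i + 1) dvd j}"
  proof (rule set_eqI, rule iffI)
    fix d assume d: "d \<in> {d. d dvd j}"
    then have "d \<le> j" "0 < d" using j by (auto intro: dvd_imp_le intro!: Nat.gr0I)
    then show "d \<in> (\<lambda>i. i + 1) ` {i. i < n \<and> (i + 1) dvd j}"
      by (intro image_eqI[where x="d - 1"]) (use d j in auto)
  qed auto
  then have "sigma j = (\<Sum>i\<in>{i. i < n \<and> (i + 1) dvd j}. int (i + 1))"
    unfolding sigma_def by (simp add: sum.reindex inj_on_def)
  then show ?thesis by (simp add: sum_filter_lessThan)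
qed

lemma sigma_split: assumes "0 < j" shows "sigma j = sigma_o j + sigma_e j"
proof -
  have fin: "finite {d. d dvd j}" using assms by simp
  have eq: "{d. d dvd j} = {d. d dvd j \<and> odd d} \<union> {d. d dvd j \<and> even d}" by auto
  have "sigma j = (\<Sum>d\<in>{d. d dvd j \<and> odd d} \<union> {d. d dvd j \<and> even d}. int d)"
    unfolding sigma_def by (subst eq) (rule refl)
  also have "\<dots> = sigma_o j + sigma_e j"
    unfolding sigma_o_def sigma_e_def
  proof (rule sum.union_disjoint)
    show "finite {d. d dvd j \<and> odd d}" by (rule finite_subset[OF _ fin]) auto
    show "finite {d. d dvd j \<and> even d}" by (rule finite_subset[OF _ fin]) auto
  qed auto
  finally show ?thesis .
qed



definition S1 :: "nat \<Rightarrow> int fps" where "S1 n = (\<Sum>i<n. fps_const (int (2 * i + 1)) * Lam (2 * i + 1))"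
definition S2 :: "nat \<Rightarrow> int fps" where "S2 n = (\<Sum>i<n. fps_const (int (2 * i + 2)) * Lam (2 * i + 2))"
definition S0 :: "nat \<Rightarrow> int fps" where "S0 n = (\<Sum>i<n. fps_const (int (i + 1)) * Lam (i + 1))"

lemma qpoch2_prod: "qpoch (fps_X ^ 2) n = (\<Prod>i<n. 1 - fps_X ^ (2 * i + 2) :: int fps)"
  unfolding qpoch_def by (simp only: power_mult[symmetric] mult_Suc_right add.commute)

lemma qpoch1_prod: "qpoch fps_X n = (\<Prod>i<n. 1 - fps_X ^ (i + 1) :: int fps)"
  unfolding qpoch_def by simp

lemma Dop_Phi: "Dop (Phi n) = - (Phi n * S1 n)"
  unfolding Phi_def S1_def using Dop_prod[of n "\<lambda>i. 2 * i + 1"] by simp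

lemma Dop_qpoch2: "Dop (qpoch (fps_X ^ 2) n) = - (qpoch (fps_X ^ 2) n * S2 n)"
  unfolding qpoch2_prod S2_def using Dop_prod[of n "\<lambda>i. 2 * i + 2"] by simp

lemma Dop_qpoch1: "Dop (qpoch fps_X n) = - (qpoch fps_X n * S0 n)"
  unfolding qpoch1_prod S0_def using Dop_prod[of n "\<lambda>i. i + 1"] by simp

lemma S1_nth: "0 < j \<Longrightarrow> j \<le> 2 * n \<Longrightarrow> S1 n $! j = sigma_o j"
  unfolding S1_def Lamsum_nth using sigma_o_eq by simp
lemma S2_nth: "0 < j \<Longrightarrow> j \<le> 2 * n \<Longrightarrow> S2 n $! j = sigma_e j"
  unfolding S2_def Lamsum_nth using sigma_e_eq by simp
lemma S0_nth: "0 < j \<Longrightarrow> j \<le> n \<Longrightarrow> S0 n $! j = sigma j"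
  unfolding S0_def Lamsum_nth using sigma_eq by simp

lemma S_nth0: "S0 n $! 0 = 0" "S1 n $! 0 = 0" "S2 n $! 0 = 0"
  unfolding S0_def S1_def S2_def Lamsum_nth by simp_all

definition Fa :: "int fps" where "Fa = Abs_fps (\<lambda>j. if j = 0 then 0 else sigma j + sigma_o j)"

lemma part_a_coeff:
  assumes n: "1 \<le> n"
  shows "of_nat n * Gs $! n = - (Gs * Fa) $! n"
proof -
  define M where "M = Suc n"
  define P where "P = Phi M * Phi M * qpoch (fps_X ^ 2) M"
  define S where "S = S1 M + S1 M + S2 M"
  have G: "cg M Gs P" unfolding P_def M_def by (rule G1_cong)
  have DP: "Dop P = - (P * S)"
    unfolding P_def S_def Dop_mult Dop_Phi Dop_qpoch2 by (simp add: algebra_simps)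
  have SF: "cg M S Fa" unfolding cg_def
  proof (intro allI impI)
    fix j assume j: "j < M"
    show "S $! j = Fa $! j"
    proof (cases "j = 0")
      case True then show ?thesis by (simp add: S_def S_nth0 Fa_def)
    next
      case False
      have "S1 M $! j = sigma_o j" "S2 M $! j = sigma_e j" using j False by (simp_all add: S1_nth S2_nth M_def)
      then have "S $! j = sigma_o j + sigma_o j + sigma_e j"
        by (simp only: S_def fps_add_nth)
      then show ?thesis using False sigma_split[of j] by (simp add: Fa_def)
    qed
  qed
  have "cg M (Dop Gs) (Dop P)" by (rule cg_Dop[OF G])
  moreover have "cg M (Dop P) (- (Gs * Fa))"
    unfolding DP by (intro cg_uminus cg_mult cg_sym[OF G] SF)
  ultimately have "cg M (Dop Gs) (- (Gs * Fa))" by (rule cg_trans)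
  then have "Dop Gs $! n = (- (Gs * Fa)) $! n" unfolding cg_def M_def by simp
  then show ?thesis by (simp add: Dop_nth)
qed

theorem part_a:
  assumes n: "1 \<le> n"
  shows "sigma n + sigma_o n
           + 2 * (\<Sum>k=1..n-1. (-1) ^ k * delta_s k * (sigma (n - k) + sigma_o (n - k)))
           = 2 * (-1) ^ (n + 1) * int n * delta_s n"
proof -
  obtain m where m: "n = Suc m" using n by (cases n) auto
  have "(Gs * Fa) $! n = (\<Sum>j=0..n. Gs $! j * Fa $! (n - j))" by (rule fps_mult_nth)
  also have "\<dots> = (\<Sum>j=0..m. Gs $! j * Fa $! (n - j))"
    unfolding m sum.atLeast0_atMost_Suc by (simp add: Fa_def)
  also have "\<dots> = Gs $! 0 * Fa $! n + (\<Sum>j=1..m. Gs $! j * Fa $! (n - j))"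
    by (subst sum.atLeast_Suc_atMost) simp_all
  also have "(\<Sum>j=1..m. Gs $! j * Fa $! (n - j)) = 2 * (\<Sum>k=1..m. (-1) ^ k * delta_s k * (sigma (n - k) + sigma_o (n - k)))"
    unfolding sum_distrib_left
    by (rule sum.cong) (auto simp: Gs_def Fa_def m)
  finally have "(Gs * Fa) $! n = sigma n + sigma_o n + 2 * (\<Sum>k=1..m. (-1) ^ k * delta_s k * (sigma (n - k) + sigma_o (n - k)))"
    using n by (simp add: Gs_def Fa_def)
  moreover have "of_nat n * Gs $! n = - (Gs * Fa) $! n" by (rule part_a_coeff[OF n])
  moreover have gn: "Gs $! n = 2 * (-1) ^ n * delta_s n" using n by (simp add: Gs_def)
  ultimately have "sigma n + sigma_o n + 2 * (\<Sum>k=1..m. (-1) ^ k * delta_s k * (sigma (n - k) + sigma_o (n - k)))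
      = - (of_nat n * (2 * (-1) ^ n * delta_s n))" by simp
  also have "\<dots> = 2 * (-1) ^ (n + 1) * int n * delta_s n" by (simp add: algebra_simps)
  finally show ?thesis using m by simp
qed



lemma div_div_dvd: "0 < (n::nat) \<Longrightarrow> d dvd n \<Longrightarrow> n div (n div d) = d"
proof -
  assume n: "0 < n" and "d dvd n"
  then obtain k where k: "n = d * k" by blast
  then have "0 < k" "0 < d" using n by auto
  then show ?thesis using k by simp
qed

lemma sigma_s_alt: assumes "0 < n"
  shows "sigma_s n = (\<Sum>e\<in>{e. e dvd n}. (-1) ^ (n div e - 1) * int e)"
  unfolding sigma_s_def
  by (rule sum.reindex_bij_witness[where i="\<lambda>d. n div d" and j="\<lambda>d. n div d"])
     (auto simp: div_div_dvd assms)

lemma sigma_e_alt: assumes "0 < n"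
  shows "sigma_e n = (\<Sum>e\<in>{e. e dvd n \<and> even (n div e)}. 2 * int e)"
proof -
  have "{d. d dvd n \<and> even d} = (\<lambda>e. 2 * e) ` {e. e dvd n \<and> even (n div e)}"
  proof (rule set_eqI, rule iffI)
    fix d assume "d \<in> {d. d dvd n \<and> even d}"
    then obtain e where e: "d = 2 * e" "(2 * e) dvd n" by auto
    then obtain q where q: "n = 2 * e * q" by blast
    have "e dvd n" "even (n div e)" using q assms by (auto simp: mult.assoc)
    then show "d \<in> (\<lambda>e. 2 * e) ` {e. e dvd n \<and> even (n div e)}" using e by auto
  next
    fix d assume "d \<in> (\<lambda>e. 2 * e) ` {e. e dvd n \<and> even (n div e)}"
    then obtain e where e: "d = 2 * e" "e dvd n" "even (n div e)" by auto
    then have "n = e * (n div e)" by simp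
    then have "(2 * e) dvd n" using e(3) by (metis dvd_mult_div_cancel mult_dvd_mono dvd_refl mult.commute)
    then show "d \<in> {d. d dvd n \<and> even d}" using e by auto
  qed
  then show ?thesis unfolding sigma_e_def by (simp add: sum.reindex inj_on_def sum_distrib_left)
qed

lemma sigma_s_eq_o: assumes "0 < n" shows "sigma_s n = sigma_o n"
proof -
  have fin: "finite {e. e dvd n}" using assms by simp
  have "sigma_s n = (\<Sum>e\<in>{e. e dvd n}. int e - (if even (n div e) then 2 * int e else 0))"
    unfolding sigma_s_alt[OF assms]
  proof (rule sum.cong[OF refl])
    fix e assume "e \<in> {e. e dvd n}"
    then have "0 < n div e" using assms by (auto intro!: Nat.gr0I simp: dvd_div_eq_0_iff)
    then show "(-1) ^ (n div e - 1) * int e = int e - (if even (n div e) then 2 * int e else 0)"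
      by (cases "n div e") auto
  qed
  also have "\<dots> = sigma n - (\<Sum>e\<in>{e. e dvd n}. if even (n div e) then 2 * int e else 0)"
    by (simp add: sum_subtractf sigma_def)
  also have "(\<Sum>e\<in>{e. e dvd n}. if even (n div e) then 2 * int e else 0) = sigma_e n"
  proof -
    have "{e. e dvd n \<and> even (n div e)} = {e \<in> {e. e dvd n}. even (n div e)}" by auto
    then show ?thesis unfolding sigma_e_alt[OF assms] using sum.inter_filter[OF fin, of "\<lambda>e. 2 * int e" "\<lambda>e. even (n div e)"]
      by simp
  qed
  also have "sigma n = sigma_o n + sigma_e n"
  proof -
    have eq: "{d. d dvd n} = {d. d dvd n \<and> odd d} \<union> {d. d dvd n \<and> even d}" by auto
    have "sigma n = (\<Sum>d\<in>{d. d dvd n \<and> odd d} \<union> {d. d dvd n \<and> even d}. int d)"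
      unfolding sigma_def by (subst eq) (rule refl)
    also have "\<dots> = sigma_o n + sigma_e n"
      unfolding sigma_o_def sigma_e_def
    proof (rule sum.union_disjoint)
      show "finite {d. d dvd n \<and> odd d}" by (rule finite_subset[OF _ fin]) auto
      show "finite {d. d dvd n \<and> even d}" by (rule finite_subset[OF _ fin]) auto
    qed auto
    finally show ?thesis .
  qed
  finally show ?thesis by simp
qed



definition Ap :: "nat \<Rightarrow> int fps" where "Ap n = (\<Prod>i<n. 1 + fps_X ^ Suc i)"
definition Bp :: "nat \<Rightarrow> int fps" where "Bp n = (\<Prod>i<n. 1 + fps_X ^ i)"
definition wt :: "nat \<Rightarrow> nat \<Rightarrow> nat" where "wt n k = (if n \<le> k then tri (k - n) else tri (n - k + 1))"

lemma prod_X_tri: "(\<Prod>t<n. fps_X ^ t) = (fps_X ^ tri n :: int fps)"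
  by (induction n) (simp_all add: power_add)

lemma fin2: "Ap n * Bp n = (\<Sum>k\<le>2*n. qbin fps_X (2 * n) k * fps_X ^ wt n k)"
proof -
  define a :: "int fps" where "a = fps_X ^ n"
  define c where "c = tri n + n * n"
  have Q: "(\<Prod>t<2*n. a + 1 * fps_X ^ t) = (\<Sum>k\<le>2*n. qbin fps_X (2*n) k * fps_X ^ tri k * 1 ^ k * a ^ (2*n - k))"
    by (rule qbin_thm)
  have R: "(\<Sum>k\<le>2*n. qbin fps_X (2*n) k * fps_X ^ tri k * 1 ^ k * a ^ (2*n - k))
      = fps_X ^ c * (\<Sum>k\<le>2*n. qbin fps_X (2 * n) k * fps_X ^ wt n k)"
    unfolding sum_distrib_left
  proof (rule sum.cong[OF refl])
    fix k assume "k \<in> {..2*n}"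
    then have k: "k \<le> 2 * n" by simp
    have "fps_X ^ tri k * a ^ (2*n - k) = (fps_X ^ (tri k + n * (2 * n - k)) :: int fps)"
      by (simp add: a_def power_add power_mult)
    also have "\<dots> = fps_X ^ c * fps_X ^ wt n k"
      unfolding exp2[OF k] c_def wt_def by (simp add: power_add)
    finally show "qbin fps_X (2*n) k * fps_X ^ tri k * 1 ^ k * a ^ (2*n - k) =
        fps_X ^ c * (qbin fps_X (2 * n) k * fps_X ^ wt n k)"
      by (simp add: algebra_simps)
  qed
  have L1: "(\<Prod>t<n. a + 1 * fps_X ^ t) = fps_X ^ tri n * Ap n"
  proof -
    have "(\<Prod>t<n. a + 1 * fps_X ^ t) = (\<Prod>r<n. a + 1 * fps_X ^ (n - Suc r))"
      by (rule prod.nat_diff_reindex[symmetric])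
    also have "\<dots> = (\<Prod>r<n. fps_X ^ (n - Suc r) * (1 + fps_X ^ Suc r))"
    proof (rule prod.cong[OF refl])
      fix r assume "r \<in> {..<n}"
      then have "(n - Suc r) + Suc r = n" by simp
      then have "a = fps_X ^ (n - Suc r) * fps_X ^ Suc r"
        unfolding a_def by (metis power_add)
      then show "a + 1 * fps_X ^ (n - Suc r) = fps_X ^ (n - Suc r) * (1 + fps_X ^ Suc r)"
        by (simp add: algebra_simps)
    qed
    also have "\<dots> = (\<Prod>r<n. fps_X ^ (n - Suc r)) * Ap n"
      unfolding Ap_def by (rule prod.distrib)
    also have "(\<Prod>r<n. fps_X ^ (n - Suc r)) = (\<Prod>t<n. fps_X ^ t :: int fps)"
      by (rule prod.nat_diff_reindex)
    finally show ?thesis by (simp add: prod_X_tri)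
  qed
  have L2: "(\<Prod>s<n. a + 1 * fps_X ^ (n + s)) = fps_X ^ (n * n) * Bp n"
  proof -
    have "(\<Prod>s<n. a + 1 * fps_X ^ (n + s)) = (\<Prod>s<n. fps_X ^ n * (1 + fps_X ^ s))"
      by (rule prod.cong[OF refl]) (simp add: a_def power_add algebra_simps)
    also have "\<dots> = (\<Prod>s<n. fps_X ^ n) * Bp n"
      unfolding Bp_def by (rule prod.distrib)
    also have "(\<Prod>s<n. fps_X ^ n) = (fps_X ^ (n * n) :: int fps)"
      by (simp only: prod_constant card_lessThan power_mult)
    finally show ?thesis .
  qed
  have "(\<Prod>t<2*n. a + 1 * fps_X ^ t) = fps_X ^ c * (Ap n * Bp n)"
  proof -
    have e: "fps_X ^ tri n * fps_X ^ (n * n) = (fps_X ^ c :: int fps)"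
      by (simp add: c_def flip: power_add)
    show ?thesis unfolding mult_2 prod_add_split L1 L2 e[symmetric]
      by (simp only: mult_ac)
  qed
  then have "fps_X ^ c * (Ap n * Bp n) = fps_X ^ c * (\<Sum>k\<le>2*n. qbin fps_X (2 * n) k * fps_X ^ wt n k)"
    using Q R by simp
  then show ?thesis by simp
qed

lemma tri_ge: "j \<le> tri j + 1" "j \<le> tri (Suc j)"
  by (induction j) auto

lemma tri_mono: "a < b \<Longrightarrow> tri (Suc a) < tri (Suc b)"
proof (induction b)
  case 0 then show ?case by simp
next
  case (Suc b)
  then show ?case by (cases "a = b") auto
qed

lemma tri_inj: "tri (Suc a) = tri (Suc b) \<Longrightarrow> a = b"
  by (metis linorder_neq_iff tri_mono less_irrefl)

definition Psi :: "int fps" where "Psi = Abs_fps delta_t"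

lemma delta_t_tri: "delta_t i = (if \<exists>m. i = tri (Suc m) then 1 else 0)"
  unfolding delta_t_def tri_Suc_div by simp

lemma G2_trunc: "cg n (Psi + Psi) (\<Sum>k\<le>2*n. fps_X ^ wt n k)"
  unfolding cg_def
proof (intro allI impI)
  fix i assume i: "i < n"
  have "(\<Sum>k\<le>2*n. fps_X ^ wt n k) $! i = (\<Sum>k\<le>2*n. (if i = wt n k then 1::int else 0))"
    by (simp add: fps_sum_nth)
  also have "\<dots> = (\<Sum>r\<le>n. (if i = tri (Suc r) then 1 else 0)) + (\<Sum>s\<in>{1..n}. (if i = tri s then 1 else 0))"
    unfolding sum_split_mid
  proof (intro arg_cong2[where f="(+)"] sum.cong refl)
    fix r assume "r \<in> {..n}"
    then have "wt n (n - r) = tri (Suc r)" by (cases r) (auto simp: wt_def)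
    then show "(if i = wt n (n - r) then 1::int else 0) = (if i = tri (Suc r) then 1 else 0)" by simp
  next
    fix s assume "s \<in> {1..n}"
    then have "wt n (n + s) = tri s" by (auto simp: wt_def)
    then show "(if i = wt n (n + s) then 1::int else 0) = (if i = tri s then 1 else 0)" by simp
  qed
  also have "\<dots> = (\<Sum>r\<le>n. (if i = tri (Suc r) then 1 else 0)) + (\<Sum>r<n. (if i = tri (Suc r) then 1 else 0))"
    by (simp only: One_nat_def sum.atLeast1_atMost_eq)
  also have "\<dots> = (Psi + Psi) $! i"
  proof (cases "\<exists>m. i = tri (Suc m)")
    case True
    then obtain m where m: "i = tri (Suc m)" by blast
    have mn: "m < n" using tri_ge(2)[of m] i m by simp
    have iff1: "(i = tri (Suc r)) = (r = m)" for r using tri_inj m by blast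
    have "(\<Sum>r\<le>n. (if i = tri (Suc r) then 1::int else 0)) + (\<Sum>r<n. (if i = tri (Suc r) then 1 else 0)) = 2"
      unfolding iff1 using mn by simp
    moreover have "delta_t i = 1" using True unfolding delta_t_tri by simp
    then have "(Psi + Psi) $! i = 2" unfolding fps_add_nth Psi_def fps_nth_Abs_fps by simp
    ultimately show ?thesis by simp
  next
    case False
    then have "(i = tri (Suc r)) = False" for r by blast
    moreover have "delta_t i = 0" using False unfolding delta_t_tri by simp
    ultimately show ?thesis unfolding fps_add_nth Psi_def fps_nth_Abs_fps by simp
  qed
  finally show "(Psi + Psi) $! i = (\<Sum>k\<le>2*n. fps_X ^ wt n k) $! i" by simp
qed

lemma G2_cong:
  shows "cg n (Psi + Psi) (Ap n * Bp n * qpoch fps_X n)"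
proof -
  have eq: "Ap n * Bp n * qpoch fps_X n
      = (\<Sum>k\<le>2*n. fps_X ^ wt n k * (qbin (fps_X ^ 1) (2 * n) k * qpoch (fps_X ^ 1) n))"
    unfolding fin2 sum_distrib_right by (simp add: mult_ac)
  have c: "cg n (\<Sum>k\<le>2*n. fps_X ^ wt n k * (qbin (fps_X ^ 1) (2 * n) k * qpoch (fps_X ^ 1) n))
       (\<Sum>k\<le>2*n. fps_X ^ wt n k)"
  proof (rule cg_sum)
    fix k assume k: "k \<in> {..2*n}"
    have d: "dst k n \<le> wt n k + 1"
      using tri_ge[of "k - n"] tri_ge[of "n - k"] by (auto simp: dst_def wt_def)
    show "cg n (fps_X ^ wt n k * (qbin (fps_X ^ 1) (2 * n) k * qpoch (fps_X ^ 1) n)) (fps_X ^ wt n k)"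
      using k d by (intro term_cg) auto
  qed
  show ?thesis unfolding eq by (rule cg_trans[OF G2_trunc cg_sym[OF c]])
qed



lemma Bp_Suc: "Bp (Suc N) = 2 * Ap N"
  unfolding Bp_def Ap_def by (simp only: prod.lessThan_Suc_shift) simp

lemma Ap_Suc: "Ap (Suc N) = Ap N * (1 + fps_X ^ Suc N)"
  unfolding Ap_def by simp

lemma Ap_qpoch: "Ap n * qpoch fps_X n = qpoch (fps_X ^ 2) n"
  unfolding Ap_def qpoch_def prod.distrib[symmetric]
  by (rule prod.cong[OF refl]) (simp add: algebra_simps flip: power_mult power_add)

lemma cg_half: "cg T (A + A) (B + B) \<Longrightarrow> cg T A B"
  unfolding cg_def fps_add_nth by simp

definition Kf :: "int fps" where "Kf = Abs_fps (\<lambda>j. if j = 0 then 0 else sigma_o j - sigma_e j)"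

lemma part_b_coeff: "of_nat n * Psi $! n = (Kf * Psi) $! n"
proof -
  define M where "M = Suc n"
  define Q where "Q = qpoch (fps_X :: int fps) M"
  define B2 where "B2 = qpoch (fps_X ^ 2 :: int fps) M"
  have h1: "cg M (Psi + Psi) (Ap M * Bp M * Q)" unfolding Q_def by (rule G2_cong)
  have AA: "cg M (Ap n) (Ap M)"
  proof -
    have "cg M (Ap n * 1) (Ap n * (1 + fps_X ^ M))"
      by (intro cg_mult cg_refl cg_sym[OF cg_one_minus[of M M, simplified]] ) (rule cg_sym, simp add: cg_def)
    then show ?thesis by (simp add: Ap_Suc M_def)
  qed
  have e1: "Ap M * Bp M * Q * Q = (Ap M * Q) * (2 * (Ap n * Q))"
    unfolding M_def Bp_Suc by (simp only: mult_ac)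
  have c2: "cg M ((Ap M * Q) * (2 * (Ap n * Q))) ((Ap M * Q) * (2 * (Ap M * Q)))"
    by (rule cg_mult[OF cg_refl cg_mult[OF cg_refl cg_mult[OF AA cg_refl]]])
  have e2: "(Ap M * Q) * (2 * (Ap M * Q)) = B2 * B2 + B2 * B2"
    unfolding B2_def Q_def Ap_qpoch by (simp only: mult_2 distrib_left)
  have c3: "cg M (Ap M * Bp M * Q * Q) (B2 * B2 + B2 * B2)"
    using c2 unfolding e1 e2 .
  have c4: "cg M ((Psi + Psi) * Q) (Ap M * Bp M * Q * Q)"
    by (rule cg_mult[OF h1 cg_refl])
  have "cg M (Psi * Q + Psi * Q) (B2 * B2 + B2 * B2)"
    using cg_trans[OF c4 c3] by (simp only: distrib_right)
  then have PB: "cg M (Psi * Q) (B2 * B2)" by (rule cg_half)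
  have D1: "Dop (Psi * Q) = Dop Psi * Q - Psi * Q * S0 M"
    unfolding Dop_mult Q_def Dop_qpoch1 by (simp add: algebra_simps)
  have D2: "Dop (B2 * B2) = - (B2 * B2 * (S2 M + S2 M))"
    unfolding Dop_mult B2_def Dop_qpoch2 by (simp add: algebra_simps)
  have KS: "cg M (S0 M - S2 M - S2 M) Kf" unfolding cg_def
  proof (intro allI impI)
    fix j assume j: "j < M"
    show "(S0 M - S2 M - S2 M) $! j = Kf $! j"
    proof (cases "j = 0")
      case True then show ?thesis by (simp add: S_nth0 Kf_def)
    next
      case False
      have "S0 M $! j = sigma j" "S2 M $! j = sigma_e j" using j False by (simp_all add: S0_nth S2_nth M_def)
      then have "(S0 M - S2 M - S2 M) $! j = sigma j - sigma_e j - sigma_e j"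
        by (simp only: fps_sub_nth)
      then show ?thesis using False sigma_split[of j] by (simp add: Kf_def)
    qed
  qed
  have "Dop Psi * Q = Dop (Psi * Q) + Psi * Q * S0 M" unfolding D1 by simp
  moreover have "cg M (Dop (Psi * Q) + Psi * Q * S0 M) (- (Psi * Q * (S2 M + S2 M)) + Psi * Q * S0 M)"
  proof (intro cg_add cg_refl)
    have "cg M (Dop (Psi * Q)) (Dop (B2 * B2))" by (rule cg_Dop[OF PB])
    moreover have "cg M (Dop (B2 * B2)) (- (Psi * Q * (S2 M + S2 M)))"
      unfolding D2 by (intro cg_uminus cg_mult cg_refl cg_sym[OF PB])
    ultimately show "cg M (Dop (Psi * Q)) (- (Psi * Q * (S2 M + S2 M)))" by (rule cg_trans)
  qed
  moreover have "- (Psi * Q * (S2 M + S2 M)) + Psi * Q * S0 M = (Psi * (S0 M - S2 M - S2 M)) * Q"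
    by (simp add: algebra_simps)
  moreover have "cg M ((Psi * (S0 M - S2 M - S2 M)) * Q) ((Psi * Kf) * Q)"
    by (intro cg_mult cg_refl KS)
  ultimately have "cg M (Dop Psi * Q) ((Psi * Kf) * Q)" by (metis cg_trans)
  then have "cg M (Dop Psi) (Psi * Kf)"
    by (rule cg_cancel) (use qpoch_nth0[of 1 M] in \<open>simp add: Q_def\<close>)
  then have "Dop Psi $! n = (Psi * Kf) $! n" unfolding cg_def M_def by simp
  then show ?thesis by (simp add: Dop_nth mult.commute)
qed

theorem part_b:
  assumes n: "1 \<le> n"
  shows "(\<Sum>k=1..n. (sigma_o k - sigma_e k) * delta_t (n - k)) = int n * delta_t n"
proof -
  have "(Kf * Psi) $! n = (\<Sum>k=0..n. Kf $! k * Psi $! (n - k))" by (rule fps_mult_nth)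
  also have "\<dots> = Kf $! 0 * Psi $! n + (\<Sum>k=1..n. Kf $! k * Psi $! (n - k))"
    by (subst sum.atLeast_Suc_atMost) simp_all
  also have "\<dots> = (\<Sum>k=1..n. (sigma_o k - sigma_e k) * delta_t (n - k))"
    by (auto simp: Kf_def Psi_def intro!: sum.cong)
  finally show ?thesis using part_b_coeff[of n] by (simp add: Psi_def)
qed


lemma part_c:
  assumes n: "2 \<le> n"
  shows "sigma n + sigma_s n
           + 2 * (\<Sum>k=1..n-1. (-1) ^ k * delta_s k * (sigma (n - k) + sigma_s (n - k)))
           = 2 * (-1) ^ (n + 1) * int n * delta_s n"
proof -
  have "(\<Sum>k=1..n-1. (-1) ^ k * delta_s k * (sigma (n - k) + sigma_s (n - k)))
      = (\<Sum>k=1..n-1. (-1) ^ k * delta_s k * (sigma (n - k) + sigma_o (n - k)))"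
    by (rule sum.cong) (auto simp: sigma_s_eq_o)
  moreover have "sigma_s n = sigma_o n" using n by (simp add: sigma_s_eq_o)
  ultimately show ?thesis using part_a[of n] n by simp
qed

theorem theorem5:
  shows "(\<forall>n::nat. n \<ge> 1 \<longrightarrow>
           sigma n + sigma_o n
           + 2 * (\<Sum>k=1..n-1. (-1) ^ k * delta_s k * (sigma (n - k) + sigma_o (n - k)))
           = 2 * (-1) ^ (n + 1) * int n * delta_s n)
       \<and> (\<forall>n::nat. n \<ge> 1 \<longrightarrow>
           (\<Sum>k=1..n. (sigma_o k - sigma_e k) * delta_t (n - k)) = int n * delta_t n)
       \<and> (\<forall>n::nat. n \<ge> 2 \<longrightarrow>
           sigma n + sigma_s n
           + 2 * (\<Sum>k=1..n-1. (-1) ^ k * delta_s k * (sigma (n - k) + sigma_s (n - k)))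
           = 2 * (-1) ^ (n + 1) * int n * delta_s n)"
  using part_a part_b part_c by blast

end
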